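(* Let $k,x_T,k_{\mathrm{on}},k_{\mathrm{off}}>0$ be constants, let $f_1,\ldots,f_n$ be functions of $(x_1,\ldots,x_n)$, and consider the system $$\dot I = k_{\mathrm{off}}x_1 - k_{\mathrm{on}} I - \lambda(C,x_1,I),\qquad \dot x_1 = f_1(x_1,\ldots,x_n) - k_{\mathrm{off}}x_1 + k_{\mathrm{on}} I + \lambda(C,x_1,I),\qquad \dot x_i = f_i(x_1,\ldots,x_n)\ (i=2,\ldots,n),$$ with the conservation law $x_1+I=x_T$, where $\dot C=h(C)$ with $C\ge 0$, and either $\lambda(C,x_1,I)=kIC$ (activation) or $\lambda(C,x_1,I)=-kx_1C$ (inhibition). Eliminating the variable $I$ yields the system $\dot{\mathbf x} = \mathbf f(\mathbf x)+\hat{\mathbf e}_1 g(u,x_1)$ with $u=kC$, where $g(u,x_1)=(u+k_{\mathrm{on}})(x_T-x_1)-k_{\mathrm{off}}x_1$ in the activation case and $g(u,x_1)=k_{\mathrm{on}}(x_T-x_1)-(u+k_{\mathrm{off}})x_1$ in the inhibition case. Moreover, the interval $[0,x_T]$ is forward-invariant for $x_1$, and at any steady state $x_1\neq 0$ and $x_1\neq x_T$.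
   Context: $\mathbf f=(f_1,\ldots,f_n)^\top$ and $\hat{\mathbf e}_1$ is the first standard basis vector of $\mathbb R^n$. $I$ is interpreted as the concentration of the inactive form of species $X_1$ and $C$ as the concentration of an external species. *)

theory Defs
  imports "HOL-Analysis.Analysis"
begin

datatype regulation = Activation | Inhibition

definition lam :: "regulation \<Rightarrow> real \<Rightarrow> real \<Rightarrow> real \<Rightarrow> real \<Rightarrow> real" where
  "lam r k C x1 I = (case r of Activation \<Rightarrow> k * I * C | Inhibition \<Rightarrow> - (k * x1 * C))"

definition g :: "regulation \<Rightarrow> real \<Rightarrow> real \<Rightarrow> real \<Rightarrow> real \<Rightarrow> real \<Rightarrow> real" where
  "g r xT kon koff u x1 = (case r of
      Activation \<Rightarrow> (u + kon) * (xT - x1) - koff * x1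
    | Inhibition \<Rightarrow> kon * (xT - x1) - (u + koff) * x1)"

end

theory Submission
  imports Defs "HOL-Analysis.Analysis"
begin

lemma deriv_sub_const:
  fixes I :: "real \<Rightarrow> real"
  assumes "(I has_real_derivative D) (at x within S)"
  shows "((\<lambda>t. I t - c) has_real_derivative D) (at x within S)"
  using DERIV_diff[OF assms DERIV_const[of c]] by simp

lemma inv_lemma:
  fixes \<phi> D :: "real \<Rightarrow> real"
  assumes st: "0 \<le> s" "s \<le> t" and ps: "\<phi> s \<le> 0"
    and der: "\<forall>\<tau>\<ge>0. (\<phi> has_real_derivative D \<tau>) (at \<tau> within {0..})"
    and neg: "\<forall>\<tau>\<ge>0. \<phi> \<tau> = 0 \<longrightarrow> D \<tau> < 0"
  shows "\<phi> t \<le> 0"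
proof (rule ccontr)
  assume "\<not> \<phi> t \<le> 0"
  hence pt: "\<phi> t > 0" by simp
  have cont: "continuous_on {s..t} \<phi>"
  unfolding continuous_on_eq_continuous_within proof (intro ballI)
    fix y assume "y \<in> {s..t}"
    hence "(\<phi> has_real_derivative D y) (at y within {0..})" using der st by auto
    hence "continuous (at y within {0..}) \<phi>" by (rule DERIV_continuous)
    thus "continuous (at y within {s..t}) \<phi>"
      by (rule continuous_within_subset) (use st in auto)
  qed
  define S where "S = {s..t} \<inter> \<phi> -` {..0}"
  have cS: "closed S" unfolding S_def by (rule continuous_closed_preimage[OF cont]) auto
  have sS: "s \<in> S" using st ps by (auto simp: S_def)
  have bS: "bdd_above S" unfolding S_def by (auto intro: bdd_aboveI[where M=t])
  define t0 where "t0 = Sup S"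
  have t0S: "t0 \<in> S" unfolding t0_def using cS sS bS closed_contains_Sup by blast
  have le: "\<And>y. y \<in> S \<Longrightarrow> y \<le> t0" unfolding t0_def using bS by (simp add: cSup_upper)
  have t0t: "t0 < t" using t0S pt by (auto simp: S_def less_le)
  have st0: "s \<le> t0" using t0S by (auto simp: S_def)
  have "\<exists>y\<ge>t0. y \<le> t \<and> \<phi> y = 0"
    apply (rule IVT') using t0S pt t0t apply (auto simp: S_def)
    by (rule continuous_on_subset[OF cont]) (use st0 in auto)
  then obtain y where y: "y \<ge> t0" "y \<le> t" "\<phi> y = 0" by auto
  hence "y \<in> S" using st0 by (auto simp: S_def)
  hence "y = t0" using le y by force
  hence p0: "\<phi> t0 = 0" using y by simp
  have "D t0 < 0" using neg p0 st st0 by auto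
  then obtain d where d: "d > 0" "\<forall>h>0. t0 + h \<in> {0..} \<longrightarrow> h < d \<longrightarrow> \<phi> t0 > \<phi> (t0 + h)"
    using has_real_derivative_neg_dec_right der st st0 by (meson order_trans)
  define h where "h = min (d/2) (t - t0)"
  have h: "h > 0" "h < d" "h \<le> t - t0" using d t0t by (auto simp: h_def)
  hence "\<phi> (t0 + h) < 0" using d p0 st st0 by auto
  hence "t0 + h \<in> S" using h st0 by (auto simp: S_def)
  thus False using le h by force
qed

theorem lemma6:
  fixes r :: regulation
    and k xT kon koff :: real
    and n :: nat
    and f :: "nat \<Rightarrow> (nat \<Rightarrow> real) \<Rightarrow> real"
    and h :: "real \<Rightarrow> real"
    and I C :: "real \<Rightarrow> real"
    and x :: "real \<Rightarrow> nat \<Rightarrow> real"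
  assumes pos: "k > 0" "xT > 0" "kon > 0" "koff > 0"
    and n1: "n \<ge> 1"
    and dI: "\<forall>t\<ge>0. (I has_real_derivative
               (koff * x t 1 - kon * I t - lam r k (C t) (x t 1) (I t))) (at t within {0..})"
    and dx1: "\<forall>t\<ge>0. ((\<lambda>s. x s 1) has_real_derivative
               (f 1 (x t) - koff * x t 1 + kon * I t + lam r k (C t) (x t 1) (I t))) (at t within {0..})"
    and dxi: "\<forall>t\<ge>0. \<forall>i\<in>{2..n}. ((\<lambda>s. x s i) has_real_derivative f i (x t)) (at t within {0..})"
    and dC: "\<forall>t\<ge>0. (C has_real_derivative h (C t)) (at t within {0..})"
    and Cnn: "\<forall>t\<ge>0. C t \<ge> 0"
    and cons: "\<forall>t\<ge>0. x t 1 + I t = xT"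
  shows "(\<forall>t\<ge>0. \<forall>i\<in>{1..n}. ((\<lambda>s. x s i) has_real_derivative
              (f i (x t) + (if i = 1 then g r xT kon koff (k * C t) (x t 1) else 0))) (at t within {0..}))
       \<and> (\<forall>s\<ge>0. x s 1 \<in> {0..xT} \<longrightarrow> (\<forall>t\<ge>s. x t 1 \<in> {0..xT}))
       \<and> (\<forall>Is Cs xs. Cs \<ge> 0 \<and> h Cs = 0 \<and> xs 1 + Is = xT
            \<and> koff * xs 1 - kon * Is - lam r k Cs (xs 1) Is = 0
            \<and> f 1 xs - koff * xs 1 + kon * Is + lam r k Cs (xs 1) Is = 0
            \<and> (\<forall>i\<in>{2..n}. f i xs = 0)
            \<longrightarrow> xs 1 \<noteq> 0 \<and> xs 1 \<noteq> xT)"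
proof -
  have P1: "\<forall>t\<ge>0. \<forall>i\<in>{1..n}. ((\<lambda>s. x s i) has_real_derivative
              (f i (x t) + (if i = 1 then g r xT kon koff (k * C t) (x t 1) else 0))) (at t within {0..})"
  proof (intro allI impI ballI)
    fix t :: real and i assume t: "t \<ge> 0" and i: "i \<in> {1..n}"
    show "((\<lambda>s. x s i) has_real_derivative
              (f i (x t) + (if i = 1 then g r xT kon koff (k * C t) (x t 1) else 0))) (at t within {0..})"
    proof (cases "i = 1")
      case True
      have "I t = xT - x t 1" using cons t by (auto simp: algebra_simps)
      hence e: "f 1 (x t) - koff * x t 1 + kon * I t + lam r k (C t) (x t 1) (I t)
           = f i (x t) + (if i = 1 then g r xT kon koff (k * C t) (x t 1) else 0)"
        using True by (cases r) (auto simp: lam_def g_def algebra_simps)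
      show ?thesis using dx1 t True e by metis
    next
      case False
      thus ?thesis using dxi t i by auto
    qed
  qed
  have P2: "\<forall>s\<ge>0. x s 1 \<in> {0..xT} \<longrightarrow> (\<forall>t\<ge>s. x t 1 \<in> {0..xT})"
  proof (intro allI impI)
    fix s t :: real assume s: "s \<ge> 0" and xs: "x s 1 \<in> {0..xT}" and st: "t \<ge> s"
    have a: "- I t \<le> 0"
    proof (rule inv_lemma[where \<phi>="\<lambda>t. - I t" and s=s and t=t])
      show "- I s \<le> 0" using xs cons[rule_format, OF s] by simp
      show "\<forall>\<tau>\<ge>0. ((\<lambda>t. - I t) has_real_derivative - (koff * x \<tau> 1 - kon * I \<tau> - lam r k (C \<tau>) (x \<tau> 1) (I \<tau>))) (at \<tau> within {0..})"
        by (intro allI impI DERIV_minus) (use dI in auto)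
      show "\<forall>\<tau>\<ge>0. - I \<tau> = 0 \<longrightarrow> - (koff * x \<tau> 1 - kon * I \<tau> - lam r k (C \<tau>) (x \<tau> 1) (I \<tau>)) < 0"
      proof (intro allI impI)
        fix \<tau> :: real assume tp: "\<tau> \<ge> 0" "- I \<tau> = 0"
        have E: "I \<tau> = 0" "x \<tau> 1 = xT" "C \<tau> \<ge> 0" using cons[rule_format, OF tp(1)] Cnn[rule_format, OF tp(1)] tp(2) by simp_all
        have "0 \<le> k * xT * C \<tau>" "0 < koff * xT" using pos E by simp_all
        thus "- (koff * x \<tau> 1 - kon * I \<tau> - lam r k (C \<tau>) (x \<tau> 1) (I \<tau>)) < 0"
          using E by (cases r) (simp_all add: lam_def)
      qed
    qed (use s st in auto)
    have b: "I t - xT \<le> 0"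
    proof (rule inv_lemma[where \<phi>="\<lambda>t. I t - xT" and s=s and t=t])
      show "I s - xT \<le> 0" using xs cons[rule_format, OF s] by simp
      show "\<forall>\<tau>\<ge>0. ((\<lambda>t. I t - xT) has_real_derivative (koff * x \<tau> 1 - kon * I \<tau> - lam r k (C \<tau>) (x \<tau> 1) (I \<tau>))) (at \<tau> within {0..})"
        by (intro allI impI deriv_sub_const) (use dI in auto)
      show "\<forall>\<tau>\<ge>0. I \<tau> - xT = 0 \<longrightarrow> (koff * x \<tau> 1 - kon * I \<tau> - lam r k (C \<tau>) (x \<tau> 1) (I \<tau>)) < 0"
      proof (intro allI impI)
        fix \<tau> :: real assume tp: "\<tau> \<ge> 0" "I \<tau> - xT = 0"
        have E: "I \<tau> = xT" "x \<tau> 1 = 0" "C \<tau> \<ge> 0" using cons[rule_format, OF tp(1)] Cnn[rule_format, OF tp(1)] tp(2) by simp_all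
        have "0 \<le> k * xT * C \<tau>" "0 < kon * xT" using pos E by simp_all
        thus "(koff * x \<tau> 1 - kon * I \<tau> - lam r k (C \<tau>) (x \<tau> 1) (I \<tau>)) < 0"
          using E by (cases r) (simp_all add: lam_def)
      qed
    qed (use s st in auto)
    have "x t 1 + I t = xT" using cons[rule_format, of t] s st by simp
    thus "x t 1 \<in> {0..xT}" using a b by simp
  qed
  have P3: "\<forall>Is Cs xs. Cs \<ge> 0 \<and> h Cs = 0 \<and> xs 1 + Is = xT
            \<and> koff * xs 1 - kon * Is - lam r k Cs (xs 1) Is = 0
            \<and> f 1 xs - koff * xs 1 + kon * Is + lam r k Cs (xs 1) Is = 0
            \<and> (\<forall>i\<in>{2..n}. f i xs = 0)
            \<longrightarrow> xs 1 \<noteq> 0 \<and> xs 1 \<noteq> xT"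
  proof (intro allI impI)
    fix Is Cs :: real and xs :: "nat \<Rightarrow> real"
    assume H: "Cs \<ge> 0 \<and> h Cs = 0 \<and> xs 1 + Is = xT
            \<and> koff * xs 1 - kon * Is - lam r k Cs (xs 1) Is = 0
            \<and> f 1 xs - koff * xs 1 + kon * Is + lam r k Cs (xs 1) Is = 0
            \<and> (\<forall>i\<in>{2..n}. f i xs = 0)"
    show "xs 1 \<noteq> 0 \<and> xs 1 \<noteq> xT"
    proof
      show "xs 1 \<noteq> 0"
      proof
        assume z: "xs 1 = 0"
        hence "Is = xT" using H by simp
        have q: "0 \<le> k * xT * Cs" "0 < kon * xT" "0 < koff * xT" using pos H by simp_all
        have e: "koff * xs 1 - kon * Is - lam r k Cs (xs 1) Is = 0" using H by blast
        show False
        proof (cases r)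
          case Activation
          hence "koff * xs 1 - kon * Is - lam r k Cs (xs 1) Is = koff * xs 1 - kon * Is - k * Is * Cs" by (simp add: lam_def)
          then show False using e q z \<open>Is = xT\<close> by (simp only: ; linarith)
        next
          case Inhibition
          hence "koff * xs 1 - kon * Is - lam r k Cs (xs 1) Is = koff * xs 1 - kon * Is - (- (k * xs 1 * Cs))" by (simp add: lam_def)
          then show False using e q z \<open>Is = xT\<close> by (simp only: ; linarith)
        qed
      qed
      show "xs 1 \<noteq> xT"
      proof
        assume z: "xs 1 = xT"
        hence "Is = 0" using H by simp
        have q: "0 \<le> k * xT * Cs" "0 < kon * xT" "0 < koff * xT" using pos H by simp_all
        have e: "koff * xs 1 - kon * Is - lam r k Cs (xs 1) Is = 0" using H by blast
        show False
        proof (cases r)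
          case Activation
          hence "koff * xs 1 - kon * Is - lam r k Cs (xs 1) Is = koff * xs 1 - kon * Is - k * Is * Cs" by (simp add: lam_def)
          then show False using e q z \<open>Is = 0\<close> by (simp only: ; linarith)
        next
          case Inhibition
          hence "koff * xs 1 - kon * Is - lam r k Cs (xs 1) Is = koff * xs 1 - kon * Is - (- (k * xs 1 * Cs))" by (simp add: lam_def)
          then show False using e q z \<open>Is = 0\<close> by (simp only: ; linarith)
        qed
      qed
    qed
  qed
  show ?thesis by (intro conjI P1 P2 P3)
qed

end
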